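(* Let $X$ be a complex Banach space, $\mathcal{F}$ an algebra with unit, and $\Phi_1,\Phi_2:\mathcal{F}\to\mathcal{C}(X)$ calculi. Suppose there is a subset $\mathcal{E}\subseteq\mathcal{F}$ such that (1) $\Phi_1(e)=\Phi_2(e)\in\mathcal{L}(X)$ for all $e\in\mathcal{E}$, and (2) $\mathcal{F}$ is anchored in $\mathcal{E}$ (with respect to $\Phi_1$, equivalently $\Phi_2$). Then $\Phi_1=\Phi_2$.
   Context: $\mathcal{F}$ need not be commutative. $\mathcal{L}(X)$, $\mathcal{C}(X)$: bounded, resp. closed linear operators on $X$; operator inclusions are graph inclusions, sums/products have natural domains, "$Tx=y$" means $x\in\mathrm{dom}(T)$, $Tx=y$. A proto-calculus is a map $\Phi:\mathcal{F}\to\mathcal{C}(X)$ with (FC1) $\Phi(\mathbf{1})=I$; (FC2) $\lambda\Phi(f)\subseteq\Phi(\lambda f)$, $\Phi(f)+\Phi(g)\subseteq\Phi(f+g)$; (FC3) $\Phi(f)\Phi(g)\subseteq\Phi(fg)$ with $\mathrm{dom}(\Phi(f)\Phi(g))=\mathrm{dom}(\Phi(g))\cap\mathrm{dom}(\Phi(fg))$. $\mathrm{bdd}(\mathcal{F},\Phi)=\{f:\Phi(f)\in\mathcal{L}(X)\}$, $\mathrm{reg}(f,\Phi)=\{e: e,ef\in\mathrm{bdd}(\mathcal{F},\Phi)\}$. A calculus is a proto-calculus such that for every $f\in\mathcal{F}$ and $x,y\in X$: $\Phi(f)x=y\iff\Phi(ef)x=\Phi(e)y$ for all $e\in\mathrm{reg}(f,\Phi)$.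 For $\mathcal{E}\subseteq\mathcal{F}$ and $f\in\mathcal{F}$ let $[f]_{\mathcal{E}}=\{e\in\mathcal{E}:ef\in\mathcal{E}\}$; $f$ is anchored in $\mathcal{E}$ (w.r.t. $\Phi$) if $[f]_{\mathcal{E}}$ is nonempty, consists of $\Phi$-bounded elements, and $\bigcap_{e\in[f]_{\mathcal{E}}}\ker\Phi(e)=\{0\}$; $\mathcal{F}$ is anchored in $\mathcal{E}$ if every $f\in\mathcal{F}$ is. *)

theory Defs
  imports "HOL-Analysis.Analysis"
begin

definition complex_banach_scaling :: "(complex \<Rightarrow> 'x::banach \<Rightarrow> 'x) \<Rightarrow> bool" where
  "complex_banach_scaling sX \<longleftrightarrow>
     module sX \<and>
     (\<forall>r x. sX (complex_of_real r) x = scaleR r x) \<and>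
     (\<forall>c x. norm (sX c x) = cmod c * norm x)"

definition complex_algebra_scaling :: "(complex \<Rightarrow> 'f::{ring,monoid_mult} \<Rightarrow> 'f) \<Rightarrow> bool" where
  "complex_algebra_scaling sF \<longleftrightarrow>
     module sF \<and>
     (\<forall>c a b. sF c (a * b) = sF c a * b \<and> sF c (a * b) = a * sF c b)"

text \<open>Operators are represented by their graphs; "T x = y" means (x,y) \<in> T.\<close>
definition closed_op :: "(complex \<Rightarrow> 'x::banach \<Rightarrow> 'x) \<Rightarrow> ('x \<times> 'x) set \<Rightarrow> bool" where
  "closed_op sX T \<longleftrightarrow>
     (0, 0) \<in> T \<and>
     (\<forall>x y u v. (x, y) \<in> T \<longrightarrow> (u, v) \<in> T \<longrightarrow> (x + u, y + v) \<in> T) \<and>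
     (\<forall>c x y. (x, y) \<in> T \<longrightarrow> (sX c x, sX c y) \<in> T) \<and>
     (\<forall>x y z. (x, y) \<in> T \<longrightarrow> (x, z) \<in> T \<longrightarrow> y = z) \<and>
     closed T"

definition bounded_op :: "('x::real_normed_vector \<times> 'x) set \<Rightarrow> bool" where
  "bounded_op T \<longleftrightarrow> Domain T = UNIV \<and> (\<exists>C. \<forall>(x, y) \<in> T. norm y \<le> C * norm x)"

definition op_scale :: "(complex \<Rightarrow> 'x \<Rightarrow> 'x) \<Rightarrow> complex \<Rightarrow> ('x \<times> 'x) set \<Rightarrow> ('x \<times> 'x) set" where
  "op_scale sX c T = {(x, sX c y) | x y. (x, y) \<in> T}"

definition op_add :: "('x::plus \<times> 'x) set \<Rightarrow> ('x \<times> 'x) set \<Rightarrow> ('x \<times> 'x) set" where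
  "op_add S T = {(x, y + z) | x y z. (x, y) \<in> S \<and> (x, z) \<in> T}"

text \<open>Product S T (first T, then S), natural domain.\<close>
definition op_comp :: "('x \<times> 'x) set \<Rightarrow> ('x \<times> 'x) set \<Rightarrow> ('x \<times> 'x) set" where
  "op_comp S T = {(x, z) | x y z. (x, y) \<in> T \<and> (y, z) \<in> S}"

definition op_ker :: "('x::zero \<times> 'x) set \<Rightarrow> 'x set" where
  "op_ker T = {x. (x, 0) \<in> T}"

definition proto_calculus ::
  "(complex \<Rightarrow> 'x::banach \<Rightarrow> 'x) \<Rightarrow> (complex \<Rightarrow> 'f::{ring,monoid_mult} \<Rightarrow> 'f) \<Rightarrow> ('f \<Rightarrow> ('x \<times> 'x) set) \<Rightarrow> bool" where
  "proto_calculus sX sF \<Phi> \<longleftrightarrow>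
     (\<forall>f. closed_op sX (\<Phi> f)) \<and>
     \<Phi> 1 = Id \<and>
     (\<forall>c f. op_scale sX c (\<Phi> f) \<subseteq> \<Phi> (sF c f)) \<and>
     (\<forall>f g. op_add (\<Phi> f) (\<Phi> g) \<subseteq> \<Phi> (f + g)) \<and>
     (\<forall>f g. op_comp (\<Phi> f) (\<Phi> g) \<subseteq> \<Phi> (f * g) \<and>
            Domain (op_comp (\<Phi> f) (\<Phi> g)) = Domain (\<Phi> g) \<inter> Domain (\<Phi> (f * g)))"

definition bdd_set :: "('f \<Rightarrow> ('x::real_normed_vector \<times> 'x) set) \<Rightarrow> 'f set" where
  "bdd_set \<Phi> = {f. bounded_op (\<Phi> f)}"

definition reg_set :: "('f::times \<Rightarrow> ('x::real_normed_vector \<times> 'x) set) \<Rightarrow> 'f \<Rightarrow> 'f set" where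
  "reg_set \<Phi> f = {e. e \<in> bdd_set \<Phi> \<and> e * f \<in> bdd_set \<Phi>}"

definition calculus ::
  "(complex \<Rightarrow> 'x::banach \<Rightarrow> 'x) \<Rightarrow> (complex \<Rightarrow> 'f::{ring,monoid_mult} \<Rightarrow> 'f) \<Rightarrow> ('f \<Rightarrow> ('x \<times> 'x) set) \<Rightarrow> bool" where
  "calculus sX sF \<Phi> \<longleftrightarrow>
     proto_calculus sX sF \<Phi> \<and>
     (\<forall>f x y. (x, y) \<in> \<Phi> f \<longleftrightarrow>
        (\<forall>e \<in> reg_set \<Phi> f. \<exists>w. (x, w) \<in> \<Phi> (e * f) \<and> (y, w) \<in> \<Phi> e))"

definition anchor_set :: "'f set \<Rightarrow> 'f::times \<Rightarrow> 'f set" where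
  "anchor_set E f = {e \<in> E. e * f \<in> E}"

definition anchored_in :: "('f::times \<Rightarrow> ('x::real_normed_vector \<times> 'x) set) \<Rightarrow> 'f set \<Rightarrow> 'f \<Rightarrow> bool" where
  "anchored_in \<Phi> E f \<longleftrightarrow>
     anchor_set E f \<noteq> {} \<and>
     (\<forall>e \<in> anchor_set E f. bounded_op (\<Phi> e)) \<and>
     (\<Inter>e \<in> anchor_set E f. op_ker (\<Phi> e)) = {0}"

end

theory Submission
  imports Defs
begin

lemma cop_neg:
  assumes "complex_banach_scaling sX" "closed_op sX T" "(x, y) \<in> T"
  shows "(-x, -y) \<in> T"
proof -
  have "(sX (complex_of_real (-1)) x, sX (complex_of_real (-1)) y) \<in> T"
    using assms(2,3) unfolding closed_op_def by blast
  moreover have "\<And>z. sX (complex_of_real (-1)) z = - z"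
  proof -
    fix z
    have "sX (complex_of_real (-1)) z = (-1) *\<^sub>R z"
      using assms(1) unfolding complex_banach_scaling_def by blast
    then show "sX (complex_of_real (-1)) z = - z" by simp
  qed
  ultimately show ?thesis by simp
qed

lemma cop_diff:
  assumes "complex_banach_scaling sX" "closed_op sX T" "(a, w) \<in> T" "(b, w) \<in> T"
  shows "(a - b, 0) \<in> T"
proof -
  have "(-b, -w) \<in> T" using cop_neg assms by blast
  then have "(a + -b, w + -w) \<in> T" using assms(2,3) unfolding closed_op_def by blast
  then show ?thesis by simp
qed

lemma cop_fun:
  assumes "closed_op sX T" "(x, y) \<in> T" "(x, z) \<in> T"
  shows "y = z"
  using assms unfolding closed_op_def by blast

lemma bdd_total:
  assumes "bounded_op T"
  obtains y where "(x, y) \<in> T"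
  using assms unfolding bounded_op_def by auto

lemma anch_zero:
  assumes "anchored_in \<Phi> E f" "\<And>d. d \<in> anchor_set E f \<Longrightarrow> (z, 0) \<in> \<Phi> d"
  shows "z = 0"
proof -
  have "z \<in> (\<Inter>e \<in> anchor_set E f. op_ker (\<Phi> e))"
    using assms(2) unfolding op_ker_def by auto
  then show ?thesis using assms(1) unfolding anchored_in_def by auto
qed

lemma lemA:
  assumes sc: "complex_banach_scaling sX"
    and c1: "\<forall>f. closed_op sX (\<Phi>1 f)" and c2: "\<forall>f. closed_op sX (\<Phi>2 f)"
    and m1: "\<forall>f g. op_comp (\<Phi>1 f) (\<Phi>1 g) \<subseteq> \<Phi>1 (f * g)"
    and m2: "\<forall>f g. op_comp (\<Phi>2 f) (\<Phi>2 g) \<subseteq> \<Phi>2 (f * g)"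
    and ag: "\<forall>e \<in> E. \<Phi>1 e = \<Phi>2 e \<and> bounded_op (\<Phi>1 e)"
    and an: "\<forall>f. anchored_in \<Phi>1 E f"
    and d1: "Domain (\<Phi>1 g) = UNIV" and d2: "Domain (\<Phi>2 g) = UNIV"
  shows "\<Phi>1 g \<subseteq> \<Phi>2 g"
proof
  fix p assume "p \<in> \<Phi>1 g"
  then obtain x y where p: "p = (x, y)" and xy: "(x, y) \<in> \<Phi>1 g" by (cases p) auto
  obtain y' where xy': "(x, y') \<in> \<Phi>2 g" using d2 by blast
  have "y - y' = 0"
  proof (rule anch_zero[OF an[rule_format]])
    fix d assume d: "d \<in> anchor_set E g"
    then have dE: "d \<in> E" and dgE: "d * g \<in> E" unfolding anchor_set_def by auto
    obtain w where yw: "(y, w) \<in> \<Phi>1 d" using ag dE bdd_total by blast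
    obtain w' where yw': "(y', w') \<in> \<Phi>1 d" using ag dE bdd_total by blast
    have "(x, w) \<in> \<Phi>1 (d * g)" using m1 xy yw unfolding op_comp_def by blast
    moreover have "(x, w') \<in> \<Phi>2 (d * g)" using m2 xy' yw' ag dE unfolding op_comp_def by blast
    ultimately have "w = w'" using ag dgE c1 cop_fun by metis
    then show "(y - y', 0) \<in> \<Phi>1 d" using cop_diff[OF sc] c1 yw yw' by blast
  qed
  then show "p \<in> \<Phi>2 g" using p xy' by simp
qed

lemma lemB:
  assumes sc: "complex_banach_scaling sX"
    and cal1: "calculus sX sF \<Phi>1" and cal2: "calculus sX sF \<Phi>2"
    and ag: "\<forall>e \<in> E. \<Phi>1 e = \<Phi>2 e \<and> bounded_op (\<Phi>1 e)"
    and an: "\<forall>f. anchored_in \<Phi>1 E f"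
    and an2: "\<forall>f. anchored_in \<Phi>2 E f"
    and gb: "g \<in> bdd_set \<Phi>2"
  shows "\<Phi>2 g \<subseteq> \<Phi>1 g"
proof -
  have c1: "\<forall>f. closed_op sX (\<Phi>1 f)" and c2: "\<forall>f. closed_op sX (\<Phi>2 f)"
    and m1: "\<forall>f g. op_comp (\<Phi>1 f) (\<Phi>1 g) \<subseteq> \<Phi>1 (f * g)"
    and m2: "\<forall>f g. op_comp (\<Phi>2 f) (\<Phi>2 g) \<subseteq> \<Phi>2 (f * g)"
    and ch1: "\<And>f x y. (x, y) \<in> \<Phi>1 f \<longleftrightarrow>
        (\<forall>e \<in> reg_set \<Phi>1 f. \<exists>w. (x, w) \<in> \<Phi>1 (e * f) \<and> (y, w) \<in> \<Phi>1 e)"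
    using cal1 cal2 unfolding calculus_def proto_calculus_def by meson+
  have gB: "bounded_op (\<Phi>2 g)" using gb unfolding bdd_set_def by simp
  show ?thesis
  proof
    fix p assume "p \<in> \<Phi>2 g"
    then obtain x y where p: "p = (x, y)" and xy: "(x, y) \<in> \<Phi>2 g" by (cases p) auto
    have "(x, y) \<in> \<Phi>1 g"
    proof (subst ch1, intro ballI)
      fix e assume e: "e \<in> reg_set \<Phi>1 g"
      then have eB: "bounded_op (\<Phi>1 e)" and egB: "bounded_op (\<Phi>1 (e * g))"
        unfolding reg_set_def bdd_set_def by auto
      obtain w where xw: "(x, w) \<in> \<Phi>1 (e * g)" using egB bdd_total by blast
      obtain v where yv: "(y, v) \<in> \<Phi>1 e" using eB bdd_total by blast
      have "w - v = 0"
      proof (rule anch_zero[OF an[rule_format]])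
        fix d assume d: "d \<in> anchor_set E e"
        then have dE: "d \<in> E" and deE: "d * e \<in> E" unfolding anchor_set_def by auto
        obtain a where wa: "(w, a) \<in> \<Phi>1 d" using ag dE bdd_total by blast
        obtain b where vb: "(v, b) \<in> \<Phi>1 d" using ag dE bdd_total by blast
        have xa: "(x, a) \<in> \<Phi>1 (d * e * g)"
          using m1 xw wa unfolding op_comp_def by (simp add: mult.assoc) blast
        have yb: "(y, b) \<in> \<Phi>2 (d * e)"
          using m1 yv vb ag deE unfolding op_comp_def by blast
        have xb: "(x, b) \<in> \<Phi>2 (d * e * g)"
          using m2 xy yb unfolding op_comp_def by blast
        have D1: "Domain (\<Phi>1 (d * e * g)) = UNIV"
        proof -
          { fix z
            obtain z1 where "(z, z1) \<in> \<Phi>1 (e * g)" using egB bdd_total by blast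
            moreover obtain z2 where "(z1, z2) \<in> \<Phi>1 d" using ag dE bdd_total by blast
            ultimately have "(z, z2) \<in> \<Phi>1 (d * e * g)"
              using m1 unfolding op_comp_def by (simp add: mult.assoc) blast
            then have "z \<in> Domain (\<Phi>1 (d * e * g))" by blast }
          then show ?thesis by blast
        qed
        have D2: "Domain (\<Phi>2 (d * e * g)) = UNIV"
        proof -
          { fix z
            obtain z1 where "(z, z1) \<in> \<Phi>2 g" using gB bdd_total by blast
            moreover obtain z2 where "(z1, z2) \<in> \<Phi>2 (d * e)" using ag deE bdd_total by metis
            ultimately have "(z, z2) \<in> \<Phi>2 (d * e * g)"
              using m2 unfolding op_comp_def by blast
            then have "z \<in> Domain (\<Phi>2 (d * e * g))" by blast }
          then show ?thesis by blast
        qed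
        have "\<Phi>1 (d * e * g) \<subseteq> \<Phi>2 (d * e * g)"
          using lemA[OF sc c1 c2 m1 m2 ag an D1 D2] .
        then have "a = b" using xa xb c2 cop_fun by blast
        then show "(w - v, 0) \<in> \<Phi>1 d" using cop_diff[OF sc] c1 wa vb by blast
      qed
      then show "\<exists>w. (x, w) \<in> \<Phi>1 (e * g) \<and> (y, w) \<in> \<Phi>1 e" using xw yv by auto
    qed
    then show "p \<in> \<Phi>1 g" using p by simp
  qed
qed

lemma half:
  assumes sc: "complex_banach_scaling sX"
    and cal1: "calculus sX sF \<Phi>1" and cal2: "calculus sX sF \<Phi>2"
    and ag: "\<forall>e \<in> E. \<Phi>1 e = \<Phi>2 e \<and> bounded_op (\<Phi>1 e)"
    and an: "\<forall>f. anchored_in \<Phi>1 E f"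
    and an2: "\<forall>f. anchored_in \<Phi>2 E f"
  shows "\<Phi>1 f \<subseteq> \<Phi>2 f"
proof -
  have c1: "\<forall>f. closed_op sX (\<Phi>1 f)" and c2: "\<forall>f. closed_op sX (\<Phi>2 f)"
    and m1: "\<forall>f g. op_comp (\<Phi>1 f) (\<Phi>1 g) \<subseteq> \<Phi>1 (f * g)"
    and m2: "\<forall>f g. op_comp (\<Phi>2 f) (\<Phi>2 g) \<subseteq> \<Phi>2 (f * g)"
    and ch2: "\<And>f x y. (x, y) \<in> \<Phi>2 f \<longleftrightarrow>
        (\<forall>e \<in> reg_set \<Phi>2 f. \<exists>w. (x, w) \<in> \<Phi>2 (e * f) \<and> (y, w) \<in> \<Phi>2 e)"
    using cal1 cal2 unfolding calculus_def proto_calculus_def by meson+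
  have ag2: "\<forall>e \<in> E. \<Phi>2 e = \<Phi>1 e \<and> bounded_op (\<Phi>2 e)" using ag by auto
  have eq: "\<Phi>1 g = \<Phi>2 g" if gb: "g \<in> bdd_set \<Phi>2" for g
  proof -
    have s: "\<Phi>2 g \<subseteq> \<Phi>1 g" using lemB[OF sc cal1 cal2 ag an an2 gb] .
    have gB: "bounded_op (\<Phi>2 g)" using gb unfolding bdd_set_def by simp
    have D2: "Domain (\<Phi>2 g) = UNIV" using gB unfolding bounded_op_def by simp
    then have D1: "Domain (\<Phi>1 g) = UNIV" using s by blast
    have "\<Phi>1 g \<subseteq> \<Phi>2 g" using lemA[OF sc c1 c2 m1 m2 ag an D1 D2] .
    with s show ?thesis by blast
  qed
  show ?thesis
  proof
    fix p assume "p \<in> \<Phi>1 f"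
    then obtain x y where p: "p = (x, y)" and xy: "(x, y) \<in> \<Phi>1 f" by (cases p) auto
    have "(x, y) \<in> \<Phi>2 f"
    proof (subst ch2, intro ballI)
      fix e assume e: "e \<in> reg_set \<Phi>2 f"
      then have e1: "e \<in> bdd_set \<Phi>2" and e2: "e * f \<in> bdd_set \<Phi>2"
        unfolding reg_set_def by auto
      have eB: "bounded_op (\<Phi>2 e)" using e1 unfolding bdd_set_def by simp
      obtain w where yw: "(y, w) \<in> \<Phi>2 e" using eB bdd_total by blast
      then have "(y, w) \<in> \<Phi>1 e" using eq[OF e1] by simp
      then have "(x, w) \<in> \<Phi>1 (e * f)" using m1 xy unfolding op_comp_def by blast
      then have "(x, w) \<in> \<Phi>2 (e * f)" using eq[OF e2] by simp
      then show "\<exists>w. (x, w) \<in> \<Phi>2 (e * f) \<and> (y, w) \<in> \<Phi>2 e" using yw by blast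
    qed
    then show "p \<in> \<Phi>2 f" using p by simp
  qed
qed

theorem theorem5p2:
  fixes sX :: "complex \<Rightarrow> 'x::banach \<Rightarrow> 'x"
    and sF :: "complex \<Rightarrow> 'f::{ring,monoid_mult} \<Rightarrow> 'f"
    and \<Phi>1 \<Phi>2 :: "'f \<Rightarrow> ('x \<times> 'x) set"
    and E :: "'f set"
  assumes "complex_banach_scaling sX"
    and "complex_algebra_scaling sF"
    and "calculus sX sF \<Phi>1"
    and "calculus sX sF \<Phi>2"
    and "\<forall>e \<in> E. \<Phi>1 e = \<Phi>2 e \<and> bounded_op (\<Phi>1 e)"
    and "\<forall>f. anchored_in \<Phi>1 E f"
  shows "\<Phi>1 = \<Phi>2"
proof -
  have an2: "\<forall>f. anchored_in \<Phi>2 E f"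
  proof
    fix f
    have "\<forall>e \<in> anchor_set E f. \<Phi>2 e = \<Phi>1 e" using assms(5) unfolding anchor_set_def by auto
    then show "anchored_in \<Phi>2 E f" using assms(6) unfolding anchored_in_def by simp
  qed
  have ag2: "\<forall>e \<in> E. \<Phi>2 e = \<Phi>1 e \<and> bounded_op (\<Phi>2 e)" using assms(5) by auto
  show ?thesis
  proof
    fix f
    show "\<Phi>1 f = \<Phi>2 f"
      using half[OF assms(1,3,4,5,6) an2, of f] half[OF assms(1,4,3) ag2 an2 assms(6), of f]
      by blast
  qed
qed

end
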